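(* Let $\mathfrak V$ be a vessel on $\Omega\subseteq\mathbb R$. Then for all $x\in\Omega$ and all $u\in D(A)$, $\sigma_1\frac{d}{dx}[C(x)\mathbb X^{-1}(x)]u=\sigma_2C(x)\mathbb X^{-1}(x)Au+\gamma_*(x)C(x)\mathbb X^{-1}(x)u$, and $\frac{d}{dx}[\mathbb X^{-1}(x)B(x)]\sigma_1=A_\zeta\mathbb X^{-1}(x)B(x)\sigma_2-\mathbb X^{-1}(x)B(x)\gamma_*(x)$.
   Context: A Krein space $\mathcal K$ is a Hilbert space with an extra continuous Hermitian (possibly indefinite) sesquilinear form; adjoints are with respect to it. Fix $2\times2$ matrices $\sigma_1$ (invertible, self-adjoint), $\sigma_2=\sigma_2^*$, $\gamma=-\gamma^*$. A node $(C,A_\zeta,\mathbb X,A,B;\sigma_1)$: bounded $C:\mathcal K\to\mathbb C^2$, $\mathbb X:\mathcal K\to\mathcal K$, $B:\mathbb C^2\to\mathcal K$, generators $A,A_\zeta$ of strongly continuous groups with common dense domain $D(A)=D(A_\zeta)$, with $\mathbb X(D(A))\subseteq D(A)$ and $A\mathbb Xu+\mathbb XA_\zeta u+B\sigma_1Cu=0$ for $u\in D(A)$; invertible if $\mathbb X$ is boundedly invertible and $\mathbb X^{-1}(D(A))\subseteq D(A)$. A prevessel: fixed $A,A_\zeta$ and bounded operators $C(x),\mathbb X(x),B(x)$ differentiable in $x\in\mathbb R$, each tuple a node, $B(x)\sigma_2e\in D(A)$ for $e\in\mathbb C^2$, with $\partial_xB=-(AB\sigma_2+B\gamma)\sigma_1^{-1}$,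 $\partial_xCu=\sigma_1^{-1}(-\sigma_2CA_\zeta u+\gamma Cu)$ ($u\in D(A)$), $\partial_x\mathbb X=B\sigma_2C$. A vessel on $\Omega$: a prevessel whose node is invertible for all $x\in\Omega$, with $\gamma_*(x)=\gamma+\sigma_2C\mathbb X^{-1}B\sigma_1-\sigma_1C\mathbb X^{-1}B\sigma_2$ on $\Omega$. *)

theory Defs
  imports "HOL-Analysis.Analysis"
begin

text \<open>A complex Hilbert space is modelled as a real Hilbert space together with an
orthogonal complex structure J (multiplication by the imaginary unit).\<close>

definition cscale :: "('k::real_vector \<Rightarrow> 'k) \<Rightarrow> complex \<Rightarrow> 'k \<Rightarrow> 'k" where
  "cscale J c u = Re c *\<^sub>R u + Im c *\<^sub>R J u"

definition complex_structure :: "('k::real_inner \<Rightarrow> 'k) \<Rightarrow> bool" where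
  "complex_structure J \<longleftrightarrow> bounded_linear J \<and> (\<forall>u. J (J u) = - u)
     \<and> (\<forall>u v. inner (J u) (J v) = inner u v)"

text \<open>Krein space: complex Hilbert space with a continuous Hermitian sesquilinear form K
(linear in the first argument, conjugate linear in the second by Hermitian symmetry).\<close>
definition krein_space :: "('k::{real_inner,complete_space} \<Rightarrow> 'k) \<Rightarrow> ('k \<Rightarrow> 'k \<Rightarrow> complex) \<Rightarrow> bool" where
  "krein_space J K \<longleftrightarrow> complex_structure J
     \<and> (\<forall>c u v w. K (cscale J c u + v) w = c * K u w + K v w)
     \<and> (\<forall>u v. K u v = cnj (K v u))
     \<and> (\<exists>M. \<forall>u v. norm (K u v) \<le> M * norm u * norm v)"

definition clin_KK :: "('k::real_normed_vector \<Rightarrow> 'k) \<Rightarrow> ('k \<Rightarrow> 'k) \<Rightarrow> bool" where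
  "clin_KK J T \<longleftrightarrow> bounded_linear T \<and> (\<forall>u. T (J u) = J (T u))"

definition clin_K2 :: "('k::real_normed_vector \<Rightarrow> 'k) \<Rightarrow> ('k \<Rightarrow> complex^2) \<Rightarrow> bool" where
  "clin_K2 J T \<longleftrightarrow> bounded_linear T \<and> (\<forall>u. T (J u) = \<i> *s T u)"

definition clin_2K :: "('k::real_normed_vector \<Rightarrow> 'k) \<Rightarrow> (complex^2 \<Rightarrow> 'k) \<Rightarrow> bool" where
  "clin_2K J T \<longleftrightarrow> bounded_linear T \<and> (\<forall>e. T (\<i> *s e) = J (T e))"

definition c0_group :: "('k::real_normed_vector \<Rightarrow> 'k) \<Rightarrow> (real \<Rightarrow> 'k \<Rightarrow> 'k) \<Rightarrow> bool" where
  "c0_group J T \<longleftrightarrow> (\<forall>t. clin_KK J (T t)) \<and> T 0 = id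
     \<and> (\<forall>s t. T (s + t) = T s \<circ> T t) \<and> (\<forall>u. continuous_on UNIV (\<lambda>t. T t u))"

definition gen_dom :: "(real \<Rightarrow> 'k::real_normed_vector \<Rightarrow> 'k) \<Rightarrow> 'k set" where
  "gen_dom T = {u. \<exists>v. ((\<lambda>t. T t u) has_vector_derivative v) (at 0)}"

definition is_generator :: "('k::real_normed_vector \<Rightarrow> 'k) \<Rightarrow> ('k \<Rightarrow> 'k) \<Rightarrow> 'k set \<Rightarrow> bool" where
  "is_generator J A D \<longleftrightarrow> (\<exists>T. c0_group J T \<and> D = gen_dom T
      \<and> (\<forall>u\<in>D. ((\<lambda>t. T t u) has_vector_derivative A u) (at 0)))"

definition cadj :: "complex^2^2 \<Rightarrow> complex^2^2" where
  "cadj M = (\<chi> i j. cnj (M $ j $ i))"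

text \<open>Inverse of a bounded operator (meaningful when it is boundedly invertible).\<close>
definition binv :: "('k::real_normed_vector \<Rightarrow>\<^sub>L 'k) \<Rightarrow> ('k \<Rightarrow>\<^sub>L 'k)" where
  "binv X = (THE Y. Y o\<^sub>L X = id_blinfun \<and> X o\<^sub>L Y = id_blinfun)"

definition is_node ::
  "('k::real_normed_vector \<Rightarrow> 'k) \<Rightarrow> ('k \<Rightarrow>\<^sub>L (complex^2)) \<Rightarrow> ('k \<Rightarrow> 'k) \<Rightarrow> ('k \<Rightarrow>\<^sub>L 'k)
   \<Rightarrow> ('k \<Rightarrow> 'k) \<Rightarrow> 'k set \<Rightarrow> ((complex^2) \<Rightarrow>\<^sub>L 'k) \<Rightarrow> complex^2^2 \<Rightarrow> bool" where
  "is_node J C Az X A D B \<sigma>1 \<longleftrightarrow>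
     is_generator J A D \<and> is_generator J Az D
     \<and> clin_K2 J (blinfun_apply C) \<and> clin_KK J (blinfun_apply X) \<and> clin_2K J (blinfun_apply B)
     \<and> blinfun_apply X ` D \<subseteq> D
     \<and> (\<forall>u\<in>D. A (X u) + X (Az u) + B (\<sigma>1 *v C u) = 0)"

definition invertible_node :: "('k::real_normed_vector \<Rightarrow>\<^sub>L 'k) \<Rightarrow> 'k set \<Rightarrow> bool" where
  "invertible_node X D \<longleftrightarrow> (\<exists>Y. Y o\<^sub>L X = id_blinfun \<and> X o\<^sub>L Y = id_blinfun \<and> blinfun_apply Y ` D \<subseteq> D)"

definition prevessel ::
  "('k::real_normed_vector \<Rightarrow> 'k) \<Rightarrow> complex^2^2 \<Rightarrow> complex^2^2 \<Rightarrow> complex^2^2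
   \<Rightarrow> ('k \<Rightarrow> 'k) \<Rightarrow> ('k \<Rightarrow> 'k) \<Rightarrow> 'k set
   \<Rightarrow> (real \<Rightarrow> 'k \<Rightarrow>\<^sub>L (complex^2)) \<Rightarrow> (real \<Rightarrow> 'k \<Rightarrow>\<^sub>L 'k) \<Rightarrow> (real \<Rightarrow> (complex^2) \<Rightarrow>\<^sub>L 'k) \<Rightarrow> bool" where
  "prevessel J \<sigma>1 \<sigma>2 \<gamma> A Az D C X B \<longleftrightarrow>
     (\<forall>x. is_node J (C x) Az (X x) A D (B x) \<sigma>1
        \<and> (\<forall>e. B x (\<sigma>2 *v e) \<in> D)
        \<and> (\<exists>B'. (B has_vector_derivative B') (at x)
             \<and> (\<forall>e. B' e = - (A (B x (\<sigma>2 *v (matrix_inv \<sigma>1 *v e))) + B x (\<gamma> *v (matrix_inv \<sigma>1 *v e)))))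
        \<and> (\<exists>C'. (C has_vector_derivative C') (at x)
             \<and> (\<forall>u\<in>D. C' u = matrix_inv \<sigma>1 *v (- (\<sigma>2 *v C x (Az u)) + \<gamma> *v C x u)))
        \<and> (\<exists>X'. (X has_vector_derivative X') (at x)
             \<and> (\<forall>u. X' u = B x (\<sigma>2 *v C x u))))"

text \<open>gamma_star(x), as the linear map on complex^2 it defines:
  gamma + sigma2 C X^-1 B sigma1 - sigma1 C X^-1 B sigma2.\<close>
definition gamma_star ::
  "complex^2^2 \<Rightarrow> complex^2^2 \<Rightarrow> complex^2^2
   \<Rightarrow> ('k::real_normed_vector \<Rightarrow>\<^sub>L (complex^2)) \<Rightarrow> ('k \<Rightarrow>\<^sub>L 'k) \<Rightarrow> ((complex^2) \<Rightarrow>\<^sub>L 'k)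
   \<Rightarrow> complex^2 \<Rightarrow> complex^2" where
  "gamma_star \<sigma>1 \<sigma>2 \<gamma> C X B e =
     \<gamma> *v e + \<sigma>2 *v C (binv X (B (\<sigma>1 *v e))) - \<sigma>1 *v C (binv X (B (\<sigma>2 *v e)))"

definition vessel ::
  "('k::real_normed_vector \<Rightarrow> 'k) \<Rightarrow> complex^2^2 \<Rightarrow> complex^2^2 \<Rightarrow> complex^2^2
   \<Rightarrow> ('k \<Rightarrow> 'k) \<Rightarrow> ('k \<Rightarrow> 'k) \<Rightarrow> 'k set
   \<Rightarrow> (real \<Rightarrow> 'k \<Rightarrow>\<^sub>L (complex^2)) \<Rightarrow> (real \<Rightarrow> 'k \<Rightarrow>\<^sub>L 'k) \<Rightarrow> (real \<Rightarrow> (complex^2) \<Rightarrow>\<^sub>L 'k)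
   \<Rightarrow> real set \<Rightarrow> bool" where
  "vessel J \<sigma>1 \<sigma>2 \<gamma> A Az D C X B \<Omega> \<longleftrightarrow>
     prevessel J \<sigma>1 \<sigma>2 \<gamma> A Az D C X B \<and> (\<forall>x\<in>\<Omega>. invertible_node (X x) D)"

end

theory Submission
  imports Defs
begin

lemma hvd_iff:
  fixes f :: "real \<Rightarrow> 'b::real_normed_vector"
  shows "(f has_vector_derivative D) (at x) \<longleftrightarrow> ((\<lambda>y. (f y - f x) /\<^sub>R (y - x)) \<longlongrightarrow> D) (at x)"
proof -
  have ev: "\<forall>\<^sub>F y in at x. norm (f y - f x - (y - x) *\<^sub>R D) / norm (y - x)
      = norm ((f y - f x) /\<^sub>R (y - x) - D)"
  proof -
    have "\<forall>\<^sub>F y in at x. y \<noteq> x" by (simp add: eventually_at_filter)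
    then show ?thesis
    proof (rule eventually_mono)
      fix y assume "y \<noteq> x"
      then have "(f y - f x) /\<^sub>R (y - x) - D = (f y - f x - (y - x) *\<^sub>R D) /\<^sub>R (y - x)"
        by (simp add: scaleR_diff_right)
      then show "norm (f y - f x - (y - x) *\<^sub>R D) / norm (y - x)
      = norm ((f y - f x) /\<^sub>R (y - x) - D)"
        by (simp add: divide_inverse_commute)
    qed
  qed
  have "(f has_vector_derivative D) (at x) \<longleftrightarrow>
     ((\<lambda>y. norm (f y - f x - (y - x) *\<^sub>R D) / norm (y - x)) \<longlongrightarrow> 0) (at x)"
    by (simp add: has_vector_derivative_def has_derivative_iff_norm bounded_linear_scaleR_left)
  also have "\<dots> \<longleftrightarrow> ((\<lambda>y. norm ((f y - f x) /\<^sub>R (y - x) - D)) \<longlongrightarrow> 0) (at x)"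
    using ev by (rule tendsto_cong)
  also have "\<dots> \<longleftrightarrow> ((\<lambda>y. (f y - f x) /\<^sub>R (y - x)) \<longlongrightarrow> D) (at x)"
    by (simp add: tendsto_norm_zero_iff LIM_zero_iff)
  finally show ?thesis .
qed

lemma mvm_minus: "(M::'a::ring_1^'n^'m) *v (- w) = - (M *v w)"
  by (metis diff_0 matrix_vector_mult_diff_distrib matrix_vector_mult_0_right)

lemma blinfun_comp_assoc: "(a o\<^sub>L b) o\<^sub>L c = a o\<^sub>L (b o\<^sub>L c)"
  by (rule blinfun_eqI) simp

lemma blinfun_comp_id [simp]: "id_blinfun o\<^sub>L a = a" "a o\<^sub>L id_blinfun = a"
  by (auto intro: blinfun_eqI)

lemma binv_eq:
  assumes "Y o\<^sub>L X = id_blinfun" "X o\<^sub>L Y = id_blinfun"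
  shows "binv X = Y"
  unfolding binv_def
proof (rule the_equality)
  show "Y o\<^sub>L X = id_blinfun \<and> X o\<^sub>L Y = id_blinfun" using assms by simp
  fix Z assume "Z o\<^sub>L X = id_blinfun \<and> X o\<^sub>L Z = id_blinfun"
  then show "Z = Y" using assms by (metis blinfun_comp_assoc blinfun_comp_id)
qed

lemma neumann:
  fixes T :: "'a::{real_normed_vector,complete_space} \<Rightarrow>\<^sub>L 'a"
  assumes nT1: "norm T < 1"
  shows "\<exists>S. S o\<^sub>L (id_blinfun - T) = id_blinfun \<and> (id_blinfun - T) o\<^sub>L S = id_blinfun
     \<and> norm S * (1 - norm T) \<le> 1"
proof -
  have c: "0 \<le> norm T" by simp
  have ex: "\<exists>!s. v + T s = s" for v
  proof (rule banach_fix_type[OF c nT1], intro allI)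
    fix s1 s2 :: 'a
    have "dist (v + T s1) (v + T s2) = norm (T (s1 - s2))"
      by (simp add: dist_norm blinfun.diff_right)
    also have "\<dots> \<le> norm T * norm (s1 - s2)" by (rule norm_blinfun)
    finally show "dist (v + T s1) (v + T s2) \<le> norm T * dist s1 s2" by (simp add: dist_norm)
  qed
  define S0 where "S0 v = (THE s. v + T s = s)" for v
  have fx: "v + T (S0 v) = S0 v" for v unfolding S0_def by (rule theI'[OF ex])
  have un: "v + T s = s \<Longrightarrow> S0 v = s" for v s unfolding S0_def by (rule the1_equality[OF ex])
  have add: "S0 (a + b) = S0 a + S0 b" for a b
  proof (rule un)
    have "a + b + T (S0 a + S0 b) = (a + T (S0 a)) + (b + T (S0 b))"
      by (simp add: blinfun.add_right algebra_simps)
    then show "a + b + T (S0 a + S0 b) = S0 a + S0 b" using fx by simp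
  qed
  have scl: "S0 (r *\<^sub>R a) = r *\<^sub>R S0 a" for r a
  proof (rule un)
    have "r *\<^sub>R a + T (r *\<^sub>R S0 a) = r *\<^sub>R (a + T (S0 a))"
      by (simp add: blinfun.scaleR_right scaleR_right_distrib)
    then show "r *\<^sub>R a + T (r *\<^sub>R S0 a) = r *\<^sub>R S0 a" using fx by simp
  qed
  have pos: "0 < 1 - norm T" using nT1 by simp
  have bnd: "norm (S0 v) * (1 - norm T) \<le> norm v" for v
  proof -
    have "norm (S0 v) = norm (v + T (S0 v))" using fx by simp
    also have "\<dots> \<le> norm v + norm (T (S0 v))" by (rule norm_triangle_ineq)
    also have "\<dots> \<le> norm v + norm T * norm (S0 v)" using norm_blinfun[of T "S0 v"] by simp
    finally show ?thesis by (simp add: algebra_simps)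
  qed
  have bnd2: "norm (S0 v) \<le> norm v * (1 / (1 - norm T))" for v
    using bnd[of v] pos by (simp add: field_simps)
  have bl: "bounded_linear S0"
    by (rule bounded_linear_intro[OF add scl bnd2])
  define S where "S = Blinfun S0"
  have Sa: "blinfun_apply S = S0" unfolding S_def using bl by (rule bounded_linear_Blinfun_apply)
  have r: "(id_blinfun - T) o\<^sub>L S = id_blinfun"
  proof (rule blinfun_eqI)
    fix v
    show "((id_blinfun - T) o\<^sub>L S) v = id_blinfun v"
      using fx[of v] by (simp add: Sa blinfun.diff_left algebra_simps)
  qed
  have l: "S o\<^sub>L (id_blinfun - T) = id_blinfun"
  proof (rule blinfun_eqI)
    fix v
    have "S0 (v - T v) = v" by (rule un) simp
    then show "(S o\<^sub>L (id_blinfun - T)) v = id_blinfun v"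
      by (simp add: Sa blinfun.diff_left)
  qed
  have "norm S \<le> 1 / (1 - norm T)"
    by (rule norm_blinfun_bound) (use pos bnd2 in \<open>auto simp: Sa mult.commute\<close>)
  then have "norm S * (1 - norm T) \<le> 1" using pos by (simp add: field_simps)
  then show ?thesis using r l by blast
qed

lemma perturb:
  fixes X0 X Y0 :: "'a::{real_normed_vector,complete_space} \<Rightarrow>\<^sub>L 'a"
  assumes Y0X0: "Y0 o\<^sub>L X0 = id_blinfun" and X0Y0: "X0 o\<^sub>L Y0 = id_blinfun"
    and small: "norm (X - X0) * norm Y0 \<le> 1/2"
  shows "binv X o\<^sub>L X = id_blinfun \<and> X o\<^sub>L binv X = id_blinfun \<and> norm (binv X) \<le> 2 * norm Y0"
proof -
  define T where "T = Y0 o\<^sub>L (X0 - X)"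
  have "norm T \<le> norm Y0 * norm (X0 - X)" unfolding T_def by (rule norm_blinfun_compose)
  also have "\<dots> = norm (X - X0) * norm Y0" by (simp add: norm_minus_commute mult.commute)
  finally have nT: "norm T \<le> 1/2" using small by linarith
  then obtain S where S1: "S o\<^sub>L (id_blinfun - T) = id_blinfun"
    and S2: "(id_blinfun - T) o\<^sub>L S = id_blinfun" and S3: "norm S * (1 - norm T) \<le> 1"
    using neumann[of T] by force
  have p1: "\<And>v. X0 (Y0 v) = v" using X0Y0 by (metis blinfun_apply_blinfun_compose blinfun_apply_id_blinfun)
  have p2: "\<And>v. Y0 (X0 v) = v" using Y0X0 by (metis blinfun_apply_blinfun_compose blinfun_apply_id_blinfun)
  have p3: "\<And>v. S (v - T v) = v" using S1
    by (metis blinfun_apply_blinfun_compose blinfun_apply_id_blinfun blinfun.diff_left)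
  have p4: "\<And>v. S v - T (S v) = v" using S2
    by (metis blinfun_apply_blinfun_compose blinfun_apply_id_blinfun blinfun.diff_left)
  have XT: "\<And>v. X v = X0 (v - T v)"
    by (simp add: T_def blinfun.diff_right blinfun.diff_left p1)
  have i1: "(S o\<^sub>L Y0) o\<^sub>L X = id_blinfun"
    by (rule blinfun_eqI) (simp add: XT p2 p3)
  have i2: "X o\<^sub>L (S o\<^sub>L Y0) = id_blinfun"
    by (rule blinfun_eqI) (simp add: XT p1 p4)
  have b: "binv X = S o\<^sub>L Y0" using binv_eq[OF i1 i2] .
  have "norm S * (1/2) \<le> norm S * (1 - norm T)" using nT by (intro mult_left_mono) auto
  then have nS: "norm S \<le> 2" using S3 by linarith
  have "norm (S o\<^sub>L Y0) \<le> norm S * norm Y0" by (rule norm_blinfun_compose)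
  also have "\<dots> \<le> 2 * norm Y0" using nS by (intro mult_right_mono) auto
  finally show ?thesis using b i1 i2 by simp
qed

lemma binv_deriv:
  fixes X :: "real \<Rightarrow> 'a::{real_normed_vector,complete_space} \<Rightarrow>\<^sub>L 'a"
  assumes d: "(X has_vector_derivative X') (at x)"
    and Y0X: "Y0 o\<^sub>L X x = id_blinfun" and XY0: "X x o\<^sub>L Y0 = id_blinfun"
  shows "((\<lambda>y. binv (X y)) has_vector_derivative - (Y0 o\<^sub>L X' o\<^sub>L Y0)) (at x)"
proof -
  have bx: "binv (X x) = Y0" by (rule binv_eq[OF Y0X XY0])
  have cont: "(X \<longlongrightarrow> X x) (at x)"
    using has_vector_derivative_continuous[OF d] by (simp add: continuous_at)
  have "\<forall>\<^sub>F y in at x. dist (X y) (X x) < 1 / (2 * (norm Y0 + 1))"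
  proof -
    have "0 < 1 / (2 * (norm Y0 + 1))" by (simp add: add_pos_nonneg) (smt (verit) norm_ge_zero)
    then show ?thesis using cont tendsto_iff by blast
  qed
  then have ev: "\<forall>\<^sub>F y in at x. norm (X y - X x) * norm Y0 \<le> 1/2"
  proof (rule eventually_mono)
    fix y assume h: "dist (X y) (X x) < 1 / (2 * (norm Y0 + 1))"
    have "norm (X y - X x) * norm Y0 \<le> norm (X y - X x) * (norm Y0 + 1)"
      by (intro mult_left_mono) auto
    also have "\<dots> \<le> 1/2"
    proof -
      have pos: "0 < 2 * (norm Y0 + 1)" by (smt (verit) norm_ge_zero)
      have "norm (X y - X x) * (2 * (norm Y0 + 1)) < 1"
        using h pos by (simp add: dist_norm pos_less_divide_eq)
      then show ?thesis by (simp add: algebra_simps)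
    qed
    finally show "norm (X y - X x) * norm Y0 \<le> 1/2" .
  qed
  have ev2: "\<forall>\<^sub>F y in at x. binv (X y) o\<^sub>L X y = id_blinfun \<and> X y o\<^sub>L binv (X y) = id_blinfun
      \<and> norm (binv (X y)) \<le> 2 * norm Y0"
    using ev by (rule eventually_mono) (rule perturb[OF Y0X XY0])
  have key: "binv (X y) - Y0 = - (binv (X y) o\<^sub>L (X y - X x) o\<^sub>L Y0)"
    if h: "binv (X y) o\<^sub>L X y = id_blinfun" for y
  proof -
    have q1: "\<And>v. binv (X y) (X y v) = v" using h
      by (metis blinfun_apply_blinfun_compose blinfun_apply_id_blinfun)
    have q2: "\<And>v. X x (Y0 v) = v" using XY0
      by (metis blinfun_apply_blinfun_compose blinfun_apply_id_blinfun)
    show ?thesis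
      by (rule blinfun_eqI) (simp add: blinfun.diff_left blinfun.diff_right blinfun.minus_left q1 q2)
  qed
  have lim1: "((\<lambda>y. binv (X y)) \<longlongrightarrow> Y0) (at x)"
  proof (rule LIM_zero_cancel, rule Lim_null_comparison)
    show "\<forall>\<^sub>F y in at x. norm (binv (X y) - Y0) \<le> 2 * norm Y0 * norm (X y - X x) * norm Y0"
      using ev2
    proof (rule eventually_mono)
      fix y assume h: "binv (X y) o\<^sub>L X y = id_blinfun \<and> X y o\<^sub>L binv (X y) = id_blinfun
      \<and> norm (binv (X y)) \<le> 2 * norm Y0"
      have "norm (binv (X y) - Y0) = norm (binv (X y) o\<^sub>L (X y - X x) o\<^sub>L Y0)"
        using key h by simp
      also have "\<dots> \<le> norm (binv (X y) o\<^sub>L (X y - X x)) * norm Y0" by (rule norm_blinfun_compose)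
      also have "\<dots> \<le> (norm (binv (X y)) * norm (X y - X x)) * norm Y0"
        by (intro mult_right_mono norm_blinfun_compose) auto
      also have "\<dots> \<le> (2 * norm Y0 * norm (X y - X x)) * norm Y0"
        using h by (intro mult_right_mono) auto
      finally show "norm (binv (X y) - Y0) \<le> 2 * norm Y0 * norm (X y - X x) * norm Y0" .
    qed
    have "((\<lambda>y. X y - X x) \<longlongrightarrow> 0) (at x)" using cont by (simp add: LIM_zero_iff)
    then have "((\<lambda>y. norm (X y - X x)) \<longlongrightarrow> 0) (at x)" by (simp add: tendsto_norm_zero_iff)
    then have "((\<lambda>y. 2 * norm Y0 * norm (X y - X x) * norm Y0) \<longlongrightarrow> 2 * norm Y0 * 0 * norm Y0) (at x)"
      by (intro tendsto_intros)
    then show "((\<lambda>y. 2 * norm Y0 * norm (X y - X x) * norm Y0) \<longlongrightarrow> 0) (at x)" by simp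
  qed
  have q: "((\<lambda>y. (X y - X x) /\<^sub>R (y - x)) \<longlongrightarrow> X') (at x)" using d hvd_iff by blast
  have "((\<lambda>y. - (binv (X y) o\<^sub>L ((X y - X x) /\<^sub>R (y - x)) o\<^sub>L Y0)) \<longlongrightarrow> - (Y0 o\<^sub>L X' o\<^sub>L Y0)) (at x)"
    by (intro tendsto_minus bounded_bilinear.tendsto[OF bounded_bilinear_blinfun_compose]
        lim1 q tendsto_const)
  moreover have "\<forall>\<^sub>F y in at x. - (binv (X y) o\<^sub>L ((X y - X x) /\<^sub>R (y - x)) o\<^sub>L Y0)
       = (binv (X y) - binv (X x)) /\<^sub>R (y - x)"
    using ev2
  proof (rule eventually_mono)
    fix y assume h: "binv (X y) o\<^sub>L X y = id_blinfun \<and> X y o\<^sub>L binv (X y) = id_blinfun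
      \<and> norm (binv (X y)) \<le> 2 * norm Y0"
    have "(binv (X y) - binv (X x)) /\<^sub>R (y - x) = (- (binv (X y) o\<^sub>L (X y - X x) o\<^sub>L Y0)) /\<^sub>R (y - x)"
      using key h bx by simp
    also have "\<dots> = - (binv (X y) o\<^sub>L ((X y - X x) /\<^sub>R (y - x)) o\<^sub>L Y0)"
      by (simp add: bounded_bilinear.scaleR_right[OF bounded_bilinear_blinfun_compose]
          bounded_bilinear.scaleR_left[OF bounded_bilinear_blinfun_compose])
    finally show "- (binv (X y) o\<^sub>L ((X y - X x) /\<^sub>R (y - x)) o\<^sub>L Y0)
       = (binv (X y) - binv (X x)) /\<^sub>R (y - x)" by simp
  qed
  ultimately have "((\<lambda>y. (binv (X y) - binv (X x)) /\<^sub>R (y - x)) \<longlongrightarrow> - (Y0 o\<^sub>L X' o\<^sub>L Y0)) (at x)"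
    by (rule Lim_transform_eventually)
  then show ?thesis using hvd_iff by blast
qed

theorem mainTheorem6:
  fixes J :: "'k::{real_inner,complete_space} \<Rightarrow> 'k"
    and K :: "'k \<Rightarrow> 'k \<Rightarrow> complex"
    and \<sigma>1 \<sigma>2 \<gamma> :: "complex^2^2"
    and A Az :: "'k \<Rightarrow> 'k" and D :: "'k set"
    and C :: "real \<Rightarrow> 'k \<Rightarrow>\<^sub>L (complex^2)"
    and X :: "real \<Rightarrow> 'k \<Rightarrow>\<^sub>L 'k"
    and B :: "real \<Rightarrow> (complex^2) \<Rightarrow>\<^sub>L 'k"
    and \<Omega> :: "real set"
  assumes "krein_space J K"
    and "invertible \<sigma>1" and "cadj \<sigma>1 = \<sigma>1" and "cadj \<sigma>2 = \<sigma>2" and "cadj \<gamma> = - \<gamma>"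
    and "vessel J \<sigma>1 \<sigma>2 \<gamma> A Az D C X B \<Omega>"
    and "x \<in> \<Omega>"
  shows "(\<exists>D'. ((\<lambda>y. C y o\<^sub>L binv (X y)) has_vector_derivative D') (at x)
            \<and> (\<forall>u\<in>D. \<sigma>1 *v D' u
                 = \<sigma>2 *v C x (binv (X x) (A u))
                   + gamma_star \<sigma>1 \<sigma>2 \<gamma> (C x) (X x) (B x) (C x (binv (X x) u))))
       \<and> (\<exists>E'. ((\<lambda>y. binv (X y) o\<^sub>L B y) has_vector_derivative E') (at x)
            \<and> (\<forall>e. E' (\<sigma>1 *v e)
                 = Az (binv (X x) (B x (\<sigma>2 *v e)))
                   - binv (X x) (B x (gamma_star \<sigma>1 \<sigma>2 \<gamma> (C x) (X x) (B x) e))))"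
proof -
  note ves = assms(6)[unfolded vessel_def prevessel_def]
  have node: "is_node J (C x) Az (X x) A D (B x) \<sigma>1" and BD: "\<And>e. B x (\<sigma>2 *v e) \<in> D"
    using ves by auto
  obtain B' where hB: "(B has_vector_derivative B') (at x)"
    and B'eq: "\<And>e. B' e = - (A (B x (\<sigma>2 *v (matrix_inv \<sigma>1 *v e))) + B x (\<gamma> *v (matrix_inv \<sigma>1 *v e)))"
    using ves by blast
  obtain C' where hC: "(C has_vector_derivative C') (at x)"
    and C'eq: "\<And>u. u \<in> D \<Longrightarrow> C' u = matrix_inv \<sigma>1 *v (- (\<sigma>2 *v C x (Az u)) + \<gamma> *v C x u)"
    using ves by blast
  obtain X' where hX: "(X has_vector_derivative X') (at x)"
    and X'eq: "\<And>u. X' u = B x (\<sigma>2 *v C x u)"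
    using ves by blast
  obtain Y where YX: "Y o\<^sub>L X x = id_blinfun" and XY: "X x o\<^sub>L Y = id_blinfun" and YD: "Y ` D \<subseteq> D"
    using ves assms(7) unfolding invertible_node_def by blast
  have bx: "binv (X x) = Y" by (rule binv_eq[OF YX XY])
  have y1: "\<And>v. Y (X x v) = v" using YX by (metis blinfun_apply_blinfun_compose blinfun_apply_id_blinfun)
  have y2: "\<And>v. X x (Y v) = v" using XY by (metis blinfun_apply_blinfun_compose blinfun_apply_id_blinfun)
  have nodeq: "\<And>u. u \<in> D \<Longrightarrow> A (X x u) + X x (Az u) + B x (\<sigma>1 *v C x u) = 0"
    using node unfolding is_node_def by blast
  have Azeq: "Az v = - Y (A (X x v)) - Y (B x (\<sigma>1 *v C x v))" if "v \<in> D" for v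
  proof -
    have "Y (A (X x v) + X x (Az v) + B x (\<sigma>1 *v C x v)) = 0" using nodeq[OF that] by simp
    then have "Y (A (X x v)) + Az v + Y (B x (\<sigma>1 *v C x v)) = 0"
      by (simp add: blinfun.add_right y1)
    then show ?thesis by (simp add: algebra_simps eq_neg_iff_add_eq_0)
  qed
  obtain \<sigma>i where si: "\<sigma>1 ** \<sigma>i = mat 1" "\<sigma>i ** \<sigma>1 = mat 1"
    using assms(2) unfolding invertible_def by blast
  have mi: "\<sigma>1 ** matrix_inv \<sigma>1 = mat 1 \<and> matrix_inv \<sigma>1 ** \<sigma>1 = mat 1"
    unfolding matrix_inv_def by (rule someI[of _ \<sigma>i]) (use si in blast)
  have m1: "\<And>w. \<sigma>1 *v (matrix_inv \<sigma>1 *v w) = w" using mi by (simp add: matrix_vector_mul_assoc)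
  have m2: "\<And>w. matrix_inv \<sigma>1 *v (\<sigma>1 *v w) = w" using mi by (simp add: matrix_vector_mul_assoc)
  have hXi: "((\<lambda>y. binv (X y)) has_vector_derivative - (Y o\<^sub>L X' o\<^sub>L Y)) (at x)"
    by (rule binv_deriv[OF hX YX XY])
  have d1: "((\<lambda>y. C y o\<^sub>L binv (X y)) has_vector_derivative
      ((C x o\<^sub>L - (Y o\<^sub>L X' o\<^sub>L Y)) + (C' o\<^sub>L Y))) (at x)"
    using bounded_bilinear.has_vector_derivative[OF bounded_bilinear_blinfun_compose hC hXi] bx by simp
  have d2: "((\<lambda>y. binv (X y) o\<^sub>L B y) has_vector_derivative
      ((Y o\<^sub>L B') + (- (Y o\<^sub>L X' o\<^sub>L Y) o\<^sub>L B x))) (at x)"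
    using bounded_bilinear.has_vector_derivative[OF bounded_bilinear_blinfun_compose hXi hB] bx by simp
  show ?thesis
  proof (intro conjI exI ballI allI)
    show "((\<lambda>y. C y o\<^sub>L binv (X y)) has_vector_derivative
      ((C x o\<^sub>L - (Y o\<^sub>L X' o\<^sub>L Y)) + (C' o\<^sub>L Y))) (at x)" by (rule d1)
    show "((\<lambda>y. binv (X y) o\<^sub>L B y) has_vector_derivative
      ((Y o\<^sub>L B') + (- (Y o\<^sub>L X' o\<^sub>L Y) o\<^sub>L B x))) (at x)" by (rule d2)
  next
    fix u assume u: "u \<in> D"
    define v where "v = Y u"
    have v: "v \<in> D" using u YD v_def by blast
    have Xv: "X x v = u" using y2 v_def by simp
    have Az1: "Az v = - Y (A u) - Y (B x (\<sigma>1 *v C x v))" using Azeq[OF v] Xv by simp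
    show "\<sigma>1 *v ((C x o\<^sub>L - (Y o\<^sub>L X' o\<^sub>L Y)) + (C' o\<^sub>L Y)) u
                 = \<sigma>2 *v C x (binv (X x) (A u))
                   + gamma_star \<sigma>1 \<sigma>2 \<gamma> (C x) (X x) (B x) (C x (binv (X x) u))"
      unfolding gamma_star_def bx
      by (simp add: v_def[symmetric] blinfun.add_left blinfun.minus_left blinfun.minus_right blinfun.diff_right
          C'eq[OF v] X'eq m1 Az1 algebra_simps mvm_minus)
  next
    fix e
    define w where "w = B x (\<sigma>2 *v e)"
    define v where "v = Y w"
    have v: "v \<in> D" using BD YD v_def w_def by blast
    have Xv: "X x v = w" using y2 v_def by simp
    have Az1: "Az v = - Y (A w) - Y (B x (\<sigma>1 *v C x v))" using Azeq[OF v] Xv by simp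
    show "((Y o\<^sub>L B') + (- (Y o\<^sub>L X' o\<^sub>L Y) o\<^sub>L B x)) (\<sigma>1 *v e)
                 = Az (binv (X x) (B x (\<sigma>2 *v e)))
                   - binv (X x) (B x (gamma_star \<sigma>1 \<sigma>2 \<gamma> (C x) (X x) (B x) e))"
      unfolding gamma_star_def bx w_def[symmetric] v_def[symmetric]
      by (simp add: blinfun.add_left blinfun.minus_left blinfun.minus_right blinfun.diff_right
          blinfun.add_right B'eq X'eq m2 Az1 algebra_simps flip: w_def v_def)
  qed
qed

end
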